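(* Let $c>1$ be an irrational number, let $f(n)=[c^{-1}(n+1)]-[c^{-1}n]$ (the indicator function of $\{[cj]:j\ge1\}$), and for a positive integer $m$ let $x=[mc]$. Then, as $m\to\infty$, $$\sum_{n=1}^x \frac{f(n)}{n} = \frac{1}{c}+ \frac{1}{c}(\log m + \log c + \gamma) -\sum_{n=1}^\infty \frac{\{c^{-1}(n+1)\}}{n(n+1)} + O\left(\frac{1}{m}\right),$$ where $\gamma$ is Euler's constant.
   Context: $[x]$ is the greatest integer not exceeding $x$ and $\{x\}=x-[x]$. *)

theory Defs
  imports "HOL-Analysis.Analysis" "HOL-Library.Landau_Symbols"
begin

definition beatty_ind :: "real \<Rightarrow> nat \<Rightarrow> int" where
  "beatty_ind c n = \<lfloor>real (n + 1) / c\<rfloor> - \<lfloor>real n / c\<rfloor>"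

end

theory Submission
  imports Defs
begin

lemma alg:
  fixes n G2 G3 :: real
  assumes "n \<ge> 0"
  shows "G2/(n+1) + (G3 - G2)/(n+1+1) = G3/(n+1+1) + G2/((n+1)*(n+1+1))"
proof -
  have h: "n + 1 + 1 \<noteq> 0" "n + 1 \<noteq> 0" using assms by linarith+
  have "G2/(n+1) + (G3 - G2)/(n+1+1) = G3/(n+1+1) + (G2/(n+1) - G2/(n+1+1))"
    by (simp add: diff_divide_distrib)
  also have "G2/(n+1) - G2/(n+1+1) = G2/((n+1)*(n+1+1))"
    using h by (simp add: divide_simps algebra_simps)
  finally show ?thesis .
qed

lemma sbp:
  fixes g :: "nat \<Rightarrow> real"
  shows "(\<Sum>n=1..Suc N. (g (n+1) - g n)/real n) = g (N+2)/real (Suc N) - g 1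
          + (\<Sum>n<N. g (n+2)/(real (Suc n) * real (Suc n + 1)))"
proof (induction N)
  case 0
  then show ?case by simp
next
  case (Suc N)
  have "(\<Sum>n=1..Suc (Suc N). (g (n+1) - g n)/real n)
       = (\<Sum>n=1..Suc N. (g (n+1) - g n)/real n) + (g (N+3) - g (N+2))/real (N+2)"
    by (simp add: numeral_eq_Suc)
  also have "\<dots> = g (N+2)/real (Suc N) - g 1
          + (\<Sum>n<N. g (n+2)/(real (Suc n) * real (Suc n + 1))) + (g (N+3) - g (N+2))/real (N+2)"
    using Suc by simp
  also have "\<dots> = g (Suc N+2)/real (Suc (Suc N)) - g 1
          + (\<Sum>n<Suc N. g (n+2)/(real (Suc n) * real (Suc n + 1)))"
  proof -
    have key: "g (N+2)/real (Suc N) + (g (N+3) - g (N+2))/real (N+2)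
        = g (N+3)/real (N+2) + g (N+2)/(real (Suc N) * real (Suc N + 1))"
      using alg[of "real N" "g (N+2)" "g (N+3)"] by (simp add: add.commute)
    show ?thesis using key by (simp add: numeral_eq_Suc)
  qed
  finally show ?case .
qed

lemma telesc:
  assumes "x \<ge> (1::nat)"
  shows "(\<lambda>k. 1/real(k+x) - 1/real(Suc k + x)) sums (1/real x)"
proof -
  have "(\<lambda>k. 1/real(k+x)) \<longlonglongrightarrow> 0"
    using LIMSEQ_ignore_initial_segment[OF lim_1_over_n, of x] by simp
  from telescope_sums'[OF this] show ?thesis by simp
qed

theorem lemma11:
  fixes c :: real
  assumes "c > 1" and "c \<notin> \<rat>"
  shows "(\<lambda>m::nat.
            (\<Sum>n = 1..nat \<lfloor>real m * c\<rfloor>. real_of_int (beatty_ind c n) / real n)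
            - (1 / c + (1 / c) * (ln (real m) + ln c + euler_mascheroni)
               - (\<Sum>n. frac (real (Suc n + 1) / c) / (real (Suc n) * real (Suc n + 1)))))
         \<in> O(\<lambda>m. 1 / real m)"
proof -
  define b where "b n = frac (real (Suc n + 1) / c) / (real (Suc n) * real (Suc n + 1))" for n
  define S where "S = (\<Sum>n. b n)"
  define g where "g n = real_of_int \<lfloor>real n / c\<rfloor>" for n
  have c0: "c > 0" using assms by simp
  have b0: "b n \<ge> 0" for n unfolding b_def by (simp add: frac_ge_0)
  have ble: "b n \<le> 1/real (n + 1) - 1/real (Suc n + 1)" for n
  proof -
    have "b n \<le> 1 / (real (Suc n) * real (Suc n + 1))"
      unfolding b_def by (intro divide_right_mono) (auto simp: less_imp_le[OF frac_lt_1])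
    also have "\<dots> = 1/real (n + 1) - 1/real (Suc n + 1)" by (simp add: field_simps)
    finally show ?thesis .
  qed
  have sb: "summable b"
    by (rule summable_comparison_test[OF _ sums_summable[OF telesc[of 1]]])
       (use b0 ble in auto)
  have main: "\<bar>(\<Sum>n = 1..nat \<lfloor>real m * c\<rfloor>. real_of_int (beatty_ind c n) / real n)
            - (1 / c + (1 / c) * (ln (real m) + ln c + euler_mascheroni) - S)\<bar> \<le> 5 / real m"
    if m1: "m \<ge> 1" for m :: nat
  proof -
    define x where "x = nat \<lfloor>real m * c\<rfloor>"
    have m0: "real m > 0" using m1 by simp
    have mc0: "real m * c > 0" using m0 c0 by simp
    have hx1: "real x \<le> real m * c" unfolding x_def using mc0 by linarith
    have hx2: "real m * c < real x + 1" unfolding x_def using mc0 by linarith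
    have "real m \<le> real m * c" using m0 assms(1) by simp
    hence "int m \<le> \<lfloor>real m * c\<rfloor>" by (simp add: le_floor_iff)
    hence hxm: "real x \<ge> real m" unfolding x_def by linarith
    hence "x \<ge> 1" using m1 by simp
    then obtain N where xN: "x = Suc N" by (cases x) auto
    have x0: "real x > 0" using xN by simp
    have ixm: "1 / real x \<le> 1 / real m" using hxm m0 by (simp add: frac_le)
    have gx: "g (N+2) = real m"
    proof -
      have "real (N+2) = real x + 1" using xN by simp
      moreover have "real m < (real x + 1)/c" using hx2 c0 by (simp add: field_simps)
      moreover have "(real x + 1)/c < real m + 1"
      proof -
        have "real x + 1 \<le> real m * c + 1" using hx1 by simp
        also have "\<dots> < (real m + 1) * c" using assms(1) by (simp add: algebra_simps)
        finally show ?thesis using c0 by (simp add: field_simps)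
      qed
      ultimately have "\<lfloor>real (N+2) / c\<rfloor> = int m"
        by (simp only: floor_eq_iff of_int_of_nat_eq) (simp add: less_imp_le)
      thus ?thesis unfolding g_def by simp
    qed
    have g1: "g 1 = 0" unfolding g_def using assms(1) by (simp add: floor_eq_iff)
    have gn: "g (n+2)/(real (Suc n) * real (Suc n + 1)) = (1/c) * (1 / real (Suc n)) - b n" for n
    proof -
      have "g (n+2) = real (Suc n + 1)/c - frac (real (Suc n + 1)/c)"
        unfolding g_def frac_def by (simp add: add.commute)
      hence "g (n+2)/(real (Suc n) * real (Suc n + 1))
          = (real (Suc n + 1)/c) / (real (Suc n) * real (Suc n + 1)) - b n"
        unfolding b_def by (simp add: diff_divide_distrib)
      also have "(real (Suc n + 1)/c) / (real (Suc n) * real (Suc n + 1)) = (1/c) * (1 / real (Suc n))"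
      proof -
        have "real (Suc n + 1) \<noteq> 0" "real (Suc n) \<noteq> 0" by simp_all
        thus ?thesis using c0 by (simp only: divide_simps mult_ac) simp
      qed
      finally show ?thesis .
    qed
    have L: "(\<Sum>n = 1..x. real_of_int (beatty_ind c n) / real n)
           = real m / real x + (1/c) * harm N - (\<Sum>n<N. b n)"
    proof -
      have "(\<Sum>n = 1..x. real_of_int (beatty_ind c n) / real n) = (\<Sum>n=1..Suc N. (g (n+1) - g n)/real n)"
        unfolding xN beatty_ind_def g_def by simp
      also have "\<dots> = g (N+2)/real (Suc N) - g 1
          + (\<Sum>n<N. g (n+2)/(real (Suc n) * real (Suc n + 1)))" by (rule sbp)
      also have "(\<Sum>n<N. g (n+2)/(real (Suc n) * real (Suc n + 1))) = (1/c) * harm N - (\<Sum>n<N. b n)"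
        unfolding gn by (simp add: sum_subtractf sum_distrib_left harm_altdef inverse_eq_divide)
      finally show ?thesis using gx g1 xN by simp
    qed
    have tail: "S - (\<Sum>n<N. b n) = (\<Sum>k. b (k + N))"
      unfolding S_def using suminf_split_initial_segment[OF sb, of N] by simp
    have tsum: "(\<lambda>k. 1/real(k+x) - 1/real(Suc k + x)) sums (1/real x)"
      using telesc \<open>x \<ge> 1\<close> by blast
    have t1: "(\<Sum>k. b (k + N)) \<le> 1 / real x"
    proof -
      have "(\<Sum>k. b (k + N)) \<le> (\<Sum>k. 1/real(k+x) - 1/real(Suc k + x))"
      proof (rule suminf_le)
        fix k
        show "b (k + N) \<le> 1/real(k+x) - 1/real(Suc k + x)" using ble[of "k+N"] unfolding xN
          by (simp add: add_ac)
      qed (use summable_ignore_initial_segment[OF sb] sums_summable[OF tsum] in auto)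
      thus ?thesis using tsum by (simp add: sums_iff)
    qed
    have t0: "(\<Sum>k. b (k + N)) \<ge> 0"
      by (rule suminf_nonneg) (use b0 summable_ignore_initial_segment[OF sb] in auto)
    have hN: "harm x = harm N + 1 / real x" using xN by (simp add: harm_Suc inverse_eq_divide)
    have e1: "euler_mascheroni \<ge> harm x - ln (real x + 1) + 1/real (2 * (N + 2))"
      using euler_mascheroni_lower[of N] xN by (simp add: add.commute)
    have e2: "euler_mascheroni \<le> harm x - ln (real x + 1) + 1/real (2 * (N + 1))"
      using euler_mascheroni_upper[of N] xN by (simp add: add.commute)
    have e3: "1/real (2 * (N + 1)) \<le> 1 / real x" using xN by (simp add: field_simps)
    have e4: "1/real (2 * (N + 2)) \<ge> 0" by simp
    have lnmc: "ln (real m) + ln c = ln (real m * c)" using m0 c0 by (simp add: ln_mult)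
    have v0: "ln (real x + 1) - ln (real m * c) \<ge> 0" using hx2 mc0 by simp
    have v1: "ln (real x + 1) - ln (real m * c) \<le> 1 / real m"
    proof -
      have "ln (real x + 1) - ln (real m * c) = ln ((real x + 1) / (real m * c))"
        using mc0 m0 c0 by (simp add: ln_div)
      also have "\<dots> \<le> (real x + 1) / (real m * c) - 1"
        by (rule ln_le_minus_one) (use mc0 in simp)
      also have "\<dots> = (real x + 1 - real m * c) / (real m * c)"
        using mc0 m0 c0 by (simp add: diff_divide_distrib)
      also have "\<dots> \<le> 1 / (real m * c)"
        using hx1 mc0 by (intro divide_right_mono) auto
      also have "\<dots> \<le> 1 / real m" using m0 assms(1) by (simp add: frac_le)
      finally show ?thesis .
    qed
    have q: "real m / real x - 1/c = (real m * c - real x) / (real x * c)"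
      using x0 c0 by (simp add: field_simps)
    have q0: "real m / real x - 1/c \<ge> 0" unfolding q using hx1 x0 c0 by simp
    have q1: "real m / real x - 1/c \<le> 1 / real m"
    proof -
      have "(real m * c - real x) / (real x * c) \<le> 1 / (real x * c)"
        using hx2 x0 c0 by (intro divide_right_mono) auto
      also have "\<dots> \<le> 1 / real x" using x0 assms(1) by (simp add: frac_le)
      finally show ?thesis unfolding q using ixm by linarith
    qed
    define w where "w = harm N - euler_mascheroni - ln (real m * c)"
    have w: "\<bar>w\<bar> \<le> 3 / real m"
    proof -
      have "3 / real m = 3 * (1 / real m)" by simp
      thus ?thesis unfolding w_def abs_le_iff using hN e1 e2 e3 e4 v0 v1 ixm by linarith
    qed
    have cw: "\<bar>(1/c) * w\<bar> \<le> 3 / real m"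
    proof -
      have "\<bar>(1/c) * w\<bar> = (1/c) * \<bar>w\<bar>" using c0 by (simp add: abs_mult)
      also have "\<dots> \<le> 1 * \<bar>w\<bar>" using assms(1) by (intro mult_right_mono) auto
      finally show ?thesis using w by simp
    qed
    have E: "(\<Sum>n = 1..x. real_of_int (beatty_ind c n) / real n)
            - (1 / c + (1 / c) * (ln (real m) + ln c + euler_mascheroni) - S)
           = (real m / real x - 1/c) + (1/c) * w + (S - (\<Sum>n<N. b n))"
      unfolding L lnmc w_def by (simp add: algebra_simps)
    show ?thesis unfolding x_def[symmetric] E tail
    proof -
      have "3 / real m = 3 * (1 / real m)" "5 / real m = 5 * (1 / real m)" by simp_all
      thus "\<bar>real m / real x - 1 / c + 1 / c * w + (\<Sum>k. b (k + N))\<bar> \<le> 5 / real m"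
        using q0 q1 cw t0 t1 ixm unfolding abs_le_iff by linarith
    qed
  qed
  show ?thesis
  proof (rule bigoI[where c = 5])
    show "eventually (\<lambda>m. norm ((\<Sum>n = 1..nat \<lfloor>real m * c\<rfloor>. real_of_int (beatty_ind c n) / real n)
            - (1 / c + (1 / c) * (ln (real m) + ln c + euler_mascheroni)
               - (\<Sum>n. frac (real (Suc n + 1) / c) / (real (Suc n) * real (Suc n + 1)))))
           \<le> 5 * norm (1 / real m)) sequentially"
      unfolding eventually_sequentially
      using main unfolding S_def b_def by (intro exI[of _ 1]) auto
  qed
qed

end
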